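(* Let $s_Z$ be the Zeckendorf sum of digits function. Let $I_Z=(I_Z(n))_{n\ge1}$ be the increasing enumeration of the points of increase of $s_Z$, $C_Z=(C_Z(n))_{n\ge1}$ the increasing enumeration of the points of constancy of $s_Z$, and $D_Z=(D_Z(n))_{n\ge1}$ the sequence with $D_Z(1)=-1$ and $D_Z(n+1)$ equal to the $n$-th smallest point of decrease of $s_Z$ ($n\ge1$). Then: (i) $I_Z(1)=0$, and the sequence $\Delta I_Z$ is the fixed point of the morphism $3\mapsto 32,\ 2\mapsto 3$ (on the alphabet $\{2,3\}$); (ii) $C_Z(1)=1$, and $\Delta C_Z$ is the fixed point of the morphism on the alphabet $\{1,3,4\}$ given by $1\mapsto 14,\ 3\mapsto 14,\ 4\mapsto 3$; (iii) $D_Z(1)=-1$, and $\Delta D_Z$ is the fixed point of the morphism $5\mapsto 53,\ 3\mapsto 5$ (on the alphabet $\{3,5\}$).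
   Context: Fibonacci numbers: $F_0=0$, $F_1=1$, $F_n=F_{n-1}+F_{n-2}$. Every integer $N\ge0$ has a unique Zeckendorf expansion $N=\sum_{i\ge0}d_i(N)F_{i+2}$ with $d_i(N)\in\{0,1\}$ and no two consecutive digits equal to $1$; $s_Z(N)=\sum_i d_i(N)$. An integer $N\ge0$ is a point of increase, constancy, or decrease of $s_Z$ according as $s_Z(N+1)-s_Z(N)$ is $>0$, $=0$, or $<0$. For a sequence $V=(V(n))_{n\ge1}$, $\Delta V$ denotes the sequence $(V(n+1)-V(n))_{n\ge1}$, viewed as an infinite word. For a morphism $\mu$ and a letter $a$ with $\mu(a)$ beginning with $a$ and of length $\ge2$, the fixed point of $\mu$ is the infinite word $\lim_n\mu^n(a)$; in each case here the fixed point is unique. *)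

theory Defs
  imports Main "HOL-Library.Infinite_Set" "HOL-Number_Theory.Fib"
begin

text \<open>A Zeckendorf expansion of N: the set S of positions i with digit d_i = 1,
  finite, no two consecutive positions, and N = sum of F_(i+2) over S.\<close>
definition zeck_rep :: "nat \<Rightarrow> nat set \<Rightarrow> bool" where
  "zeck_rep N S \<longleftrightarrow> finite S \<and> (\<forall>i\<in>S. Suc i \<notin> S) \<and> N = (\<Sum>i\<in>S. fib (i + 2))"

text \<open>Zeckendorf sum of digits (using the unique expansion).\<close>
definition sZ :: "nat \<Rightarrow> nat" where
  "sZ N = card (THE S. zeck_rep N S)"

definition incr_pts :: "nat set" where
  "incr_pts = {N. int (sZ (N+1)) - int (sZ N) > 0}"
definition const_pts :: "nat set" where
  "const_pts = {N. int (sZ (N+1)) - int (sZ N) = 0}"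
definition decr_pts :: "nat set" where
  "decr_pts = {N. int (sZ (N+1)) - int (sZ N) < 0}"

text \<open>Sequences indexed from 1 (values at index 0 are irrelevant).\<close>
definition IZ :: "nat \<Rightarrow> int" where
  "IZ n = int (enumerate incr_pts (n - 1))"
definition CZ :: "nat \<Rightarrow> int" where
  "CZ n = int (enumerate const_pts (n - 1))"
definition DZ :: "nat \<Rightarrow> int" where
  "DZ n = (if n = 1 then -1 else int (enumerate decr_pts (n - 2)))"

text \<open>Delta V as an infinite word indexed from 0: letter k is V(k+2) - V(k+1).\<close>
definition Delta :: "(nat \<Rightarrow> int) \<Rightarrow> nat \<Rightarrow> int" where
  "Delta V k = V (k + 2) - V (k + 1)"

definition morph_iter :: "(int \<Rightarrow> int list) \<Rightarrow> int \<Rightarrow> nat \<Rightarrow> int list" where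
  "morph_iter mu a n = ((\<lambda>w. concat (map mu w)) ^^ n) [a]"

definition is_fixed_point :: "(int \<Rightarrow> int list) \<Rightarrow> int \<Rightarrow> (nat \<Rightarrow> int) \<Rightarrow> bool" where
  "is_fixed_point mu a x \<longleftrightarrow>
     (\<forall>m. \<exists>n. m < length (morph_iter mu a n)) \<and>
     (\<forall>n k. k < length (morph_iter mu a n) \<longrightarrow> x k = morph_iter mu a n ! k)"

definition muI :: "int \<Rightarrow> int list" where
  "muI c = (if c = 3 then [3,2] else if c = 2 then [3] else [])"
definition muC :: "int \<Rightarrow> int list" where
  "muC c = (if c = 1 then [1,4] else if c = 3 then [1,4] else if c = 4 then [3] else [])"
definition muD :: "int \<Rightarrow> int list" where
  "muD c = (if c = 5 then [5,3] else if c = 3 then [5] else [])"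

end

theory Submission
  imports Defs
begin

declare fib.simps(3)[simp del]

lemma fib_pos2: "fib (k+2) > 0" by (simp add: fib_neq_0_nat)
lemma fib_pos2' [simp]: "fib (Suc (Suc k)) > 0" by (simp add: fib_neq_0_nat)
lemma fib_3 [simp]: "fib (Suc (Suc (Suc 0))) = 2" by (simp add: fib.simps)
lemma fib_2' [simp]: "fib (Suc (Suc 0)) = 1" by (simp add: fib.simps)

lemma zeck_bound:
  "finite S \<Longrightarrow> (\<forall>i\<in>S. Suc i \<notin> S) \<Longrightarrow> (\<forall>i\<in>S. i < m) \<Longrightarrow> (\<Sum>i\<in>S. fib (i + 2)) < fib (m + 2)"
proof (induction m arbitrary: S rule: less_induct)
  case (less m)
  show ?case
  proof (cases m)
    case 0
    then have "S = {}" using less.prems by auto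
    then show ?thesis by simp
  next
    case (Suc k)
    show ?thesis
    proof (cases "k \<in> S")
      case False
      then have "\<forall>i\<in>S. i < k" using less.prems Suc by (metis less_Suc_eq)
      then have "(\<Sum>i\<in>S. fib (i + 2)) < fib (k + 2)" using less.IH[of k S] less.prems Suc by auto
      also have "\<dots> \<le> fib (m+2)" using Suc by (simp add: fib_mono)
      finally show ?thesis .
    next
      case True
      have split: "(\<Sum>i\<in>S. fib (i + 2)) = fib (k+2) + (\<Sum>i\<in>S-{k}. fib (i + 2))"
        using True less.prems(1) by (simp add: sum.remove)
      show ?thesis
      proof (cases k)
        case 0
        then have "S - {k} = {}" using less.prems Suc by auto
        then have "(\<Sum>i\<in>S-{k}. fib (i + 2)) = 0" by (metis sum.empty)
        then show ?thesis using split Suc 0 by (simp add: numeral_2_eq_2)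
      next
        case (Suc l)
        have "l \<notin> S" using True less.prems(2) Suc by auto
        then have "\<forall>i\<in>S-{k}. i < l" using less.prems(3) \<open>m = Suc k\<close> Suc by (force simp: less_Suc_eq)
        then have "(\<Sum>i\<in>S-{k}. fib (i + 2)) < fib (l+2)"
          using less.IH[of l "S-{k}"] less.prems \<open>m = Suc k\<close> Suc by auto
        moreover have "fib (m+2) = fib (k+2) + fib (l+2)"
          using \<open>m = Suc k\<close> Suc by (simp add: fib.simps)
        ultimately show ?thesis using split by simp
      qed
    qed
  qed
qed

lemma zeck_unique: "zeck_rep N S \<Longrightarrow> zeck_rep N T \<Longrightarrow> S = T"
proof (induction N arbitrary: S T rule: less_induct)
  case (less N)
  have fS: "finite S" and fT: "finite T" using less.prems by (auto simp: zeck_rep_def)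
  show ?case
  proof (cases "S = {} \<or> T = {}")
    case True
    then have "N = 0" using less.prems by (auto simp: zeck_rep_def)
    then have "S = {}" "T = {}" using less.prems fS fT by (auto simp: zeck_rep_def; metis fib_pos2' less_irrefl)+
    then show ?thesis by simp
  next
    case False
    define a where "a = Max S"
    define b where "b = Max T"
    have aS: "a \<in> S" and bT: "b \<in> T" using False fS fT a_def b_def by auto
    have ltS: "N < fib (a + 3)"
    proof -
      have "(\<Sum>i\<in>S. fib (i + 2)) < fib (Suc a + 2)"
        by (rule zeck_bound) (use less.prems fS a_def in \<open>auto simp: zeck_rep_def le_imp_less_Suc\<close>)
      then show ?thesis using less.prems by (simp add: zeck_rep_def numeral_3_eq_3)
    qed
    have ltT: "N < fib (b + 3)"
    proof -
      have "(\<Sum>i\<in>T. fib (i + 2)) < fib (Suc b + 2)"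
        by (rule zeck_bound) (use less.prems fT b_def in \<open>auto simp: zeck_rep_def le_imp_less_Suc\<close>)
      then show ?thesis using less.prems by (simp add: zeck_rep_def numeral_3_eq_3)
    qed
    have geS: "fib (a+2) \<le> N"
    proof -
      have "fib (a+2) \<le> (\<Sum>i\<in>S. fib (i+2))" using aS fS by (intro member_le_sum) auto
      then show ?thesis using less.prems(1) unfolding zeck_rep_def by simp
    qed
    have geT: "fib (b+2) \<le> N"
    proof -
      have "fib (b+2) \<le> (\<Sum>i\<in>T. fib (i+2))" using bT fT by (intro member_le_sum) auto
      then show ?thesis using less.prems(2) unfolding zeck_rep_def by simp
    qed
    have "a = b"
    proof (rule ccontr)
      assume "a \<noteq> b"
      then consider "a < b" | "b < a" by linarith
      then show False
      proof cases
        case 1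
        then have "fib (a+3) \<le> fib (b+2)" by (simp add: fib_mono)
        then show False using ltS geT by simp
      next
        case 2
        then have "fib (b+3) \<le> fib (a+2)" by (simp add: fib_mono)
        then show False using ltT geS by simp
      qed
    qed
    have rS: "zeck_rep (N - fib (a+2)) (S - {a})"
      using less.prems aS fS by (auto simp: zeck_rep_def sum.remove)
    have rT: "zeck_rep (N - fib (a+2)) (T - {a})"
      using less.prems bT fT \<open>a = b\<close> by (auto simp: zeck_rep_def sum.remove)
    have "N - fib (a+2) < N" using geS fib_pos2[of a] by linarith
    then have "S - {a} = T - {a}" using less.IH rS rT by blast
    then show ?thesis using aS bT \<open>a = b\<close> by (metis insert_Diff)
  qed
qed

lemma fib_bracket: "N \<ge> 1 \<Longrightarrow> \<exists>k. fib (k+2) \<le> N \<and> N < fib (k+3)"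
proof (induction N)
  case 0 then show ?case by simp
next
  case (Suc N)
  show ?case
  proof (cases "N = 0")
    case True
    then show ?thesis by (intro exI[of _ 0]) (simp add: numeral_3_eq_3)
  next
    case False
    then obtain k where k: "fib (k+2) \<le> N" "N < fib (k+3)" using Suc by auto
    show ?thesis
    proof (cases "Suc N < fib (k+3)")
      case True then show ?thesis using k by (intro exI[of _ k]) simp
    next
      case False
      then have "Suc N = fib (k+3)" using k by simp
      moreover have "fib (k+4) = fib (k+3) + fib (k+2)"
        using fib_plus_2[of "k+2"] by (simp add: add.commute numeral_3_eq_3 numeral_Bit0)
      ultimately show ?thesis using fib_pos2[of k]
        by (intro exI[of _ "Suc k"]) (simp add: numeral_3_eq_3 numeral_Bit0)
    qed
  qed
qed

lemma fib_less_idx: "fib (i+2) < fib n \<Longrightarrow> i + 2 < n"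
  by (metis fib_mono not_le leD)

lemma zeck_exists: "\<exists>S. zeck_rep N S"
proof (induction N rule: less_induct)
  case (less N)
  show ?case
  proof (cases "N = 0")
    case True
    then show ?thesis by (intro exI[of _ "{}"]) (simp add: zeck_rep_def)
  next
    case False
    then have "1 \<le> N" by simp
    then obtain k where k: "fib (k+2) \<le> N" "N < fib (k+3)" using fib_bracket by blast
    have f3: "fib (k+3) = fib (k+2) + fib (k+1)" using fib_plus_2[of "k+1"] by (simp add: numeral_3_eq_3)
    define r where "r = N - fib (k+2)"
    have rl: "r < fib (k+1)" using k f3 r_def by linarith
    have "r < N" using k fib_pos2[of k] r_def by linarith
    then obtain S where S: "zeck_rep r S" using less.IH by blast
    have small: "\<forall>i\<in>S. i + 2 < k + 1"
    proof
      fix i assume "i \<in> S"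
      then have "fib (i+2) \<le> r" using S by (auto simp: zeck_rep_def intro: member_le_sum)
      then show "i + 2 < k + 1" using rl fib_less_idx by (meson le_less_trans)
    qed
    have "zeck_rep N (insert k S)"
      using S small k unfolding zeck_rep_def r_def
      by (auto simp: sum.insert_if)
    then show ?thesis by blast
  qed
qed

lemma sZ_rep: "zeck_rep N S \<Longrightarrow> sZ N = card S"
  unfolding sZ_def using zeck_unique by (metis the_equality)

lemma sZ_0: "sZ 0 = 0"
  by (rule sZ_rep[of 0 "{}", simplified]) (simp add: zeck_rep_def)

lemma sZ_step: "n \<ge> 1 \<Longrightarrow> r < fib n \<Longrightarrow> sZ (fib (n+1) + r) = Suc (sZ r)"
proof -
  assume n: "n \<ge> 1" and r: "r < fib n"
  obtain S where S: "zeck_rep r S" using zeck_exists by blast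
  have small: "\<forall>i\<in>S. i + 2 < n"
  proof
    fix i assume "i \<in> S"
    then have "fib (i+2) \<le> r" using S by (auto simp: zeck_rep_def intro: member_le_sum)
    then show "i + 2 < n" using r fib_less_idx by (meson le_less_trans)
  qed
  have "zeck_rep (fib (n+1) + r) (insert (n-1) S)"
  proof -
    have "n - 1 \<notin> S" using small by auto
    moreover have "fib (n - 1 + 2) = fib (n+1)" using n by simp
    ultimately show ?thesis using S small n unfolding zeck_rep_def
      by (auto simp: sum.insert_if)
  qed
  then have "sZ (fib (n+1) + r) = card (insert (n-1) S)" by (rule sZ_rep)
  also have "\<dots> = Suc (card S)"
  proof -
    have "n - 1 \<notin> S" using small by auto
    then show ?thesis using S by (simp add: zeck_rep_def)
  qed
  finally show ?thesis using sZ_rep[OF S] by simp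
qed

lemma fibv: "fib 3 = 2" "fib 4 = 3" "fib 5 = 5" "fib 6 = 8" "fib 7 = 13" "fib 8 = 21" "fib 9 = 34"
  by (simp_all add: fib.simps eval_nat_numeral)

lemma sZ_1: "sZ 1 = 1" using sZ_step[of 1 0] by (simp add: fibv sZ_0)
lemma sZ_1': "sZ (Suc 0) = 1" using sZ_1 by simp
lemma sZ_2: "sZ 2 = 1" using sZ_step[of 2 0] by (simp add: fibv sZ_0 sZ_1')
lemma sZ_2': "sZ (Suc (Suc 0)) = 1" using sZ_2 by (simp add: numeral_2_eq_2)
lemma sZ_3: "sZ 3 = 1" using sZ_step[of 3 0] by (simp add: fibv sZ_0 sZ_1')
lemma sZ_4: "sZ 4 = 2" using sZ_step[of 3 1] by (simp add: fibv sZ_1 sZ_1')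
lemma sZ_5: "sZ 5 = 1" using sZ_step[of 4 0] by (simp add: fibv sZ_0 sZ_1')
lemma sZ_6: "sZ 6 = 2" using sZ_step[of 4 1] by (simp add: fibv sZ_1 sZ_1')
lemma sZ_7: "sZ 7 = 2" using sZ_step[of 4 2] by (simp add: fibv sZ_2 sZ_1')
lemma sZ_8: "sZ 8 = 1" using sZ_step[of 5 0] by (simp add: fibv sZ_0 sZ_1')
lemma sZ_9: "sZ 9 = 2" using sZ_step[of 5 1] by (simp add: fibv sZ_1 sZ_1')
lemma sZ_10: "sZ 10 = 2" using sZ_step[of 5 2] by (simp add: fibv sZ_2 sZ_1')
lemma sZ_11: "sZ 11 = 2" using sZ_step[of 5 3] by (simp add: fibv sZ_3 sZ_1')
lemma sZ_12: "sZ 12 = 3" using sZ_step[of 5 4] by (simp add: fibv sZ_4 sZ_1')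
lemma sZ_13: "sZ 13 = 1" using sZ_step[of 6 0] by (simp add: fibv sZ_0 sZ_1')
lemma sZ_14: "sZ 14 = 2" using sZ_step[of 6 1] by (simp add: fibv sZ_1 sZ_1')
lemma sZ_15: "sZ 15 = 2" using sZ_step[of 6 2] by (simp add: fibv sZ_2 sZ_1')
lemma sZ_16: "sZ 16 = 2" using sZ_step[of 6 3] by (simp add: fibv sZ_3 sZ_1')

definition g :: "nat \<Rightarrow> int" where
  "g N = int (sZ (N+1)) - int (sZ N)"

lemma g_0: "g 0 = 1" by (simp add: g_def sZ_1' sZ_2' sZ_0 sZ_1)
lemma g_1: "g 1 = 0" by (simp add: g_def sZ_1' sZ_2' sZ_1 sZ_2)
lemma g_2: "g 2 = 0" by (simp add: g_def sZ_1' sZ_2' sZ_2 sZ_3)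
lemma g_3: "g 3 = 1" by (simp add: g_def sZ_1' sZ_2' sZ_3 sZ_4)
lemma g_4: "g 4 = -1" by (simp add: g_def sZ_1' sZ_2' sZ_4 sZ_5)
lemma g_5: "g 5 = 1" by (simp add: g_def sZ_1' sZ_2' sZ_5 sZ_6)
lemma g_6: "g 6 = 0" by (simp add: g_def sZ_1' sZ_2' sZ_6 sZ_7)
lemma g_7: "g 7 = -1" by (simp add: g_def sZ_1' sZ_2' sZ_7 sZ_8)
lemma g_8: "g 8 = 1" by (simp add: g_def sZ_1' sZ_2' sZ_8 sZ_9)
lemma g_9: "g 9 = 0" by (simp add: g_def sZ_1' sZ_2' sZ_9 sZ_10)
lemma g_10: "g 10 = 0" by (simp add: g_def sZ_1' sZ_2' sZ_10 sZ_11)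
lemma g_11: "g 11 = 1" by (simp add: g_def sZ_1' sZ_2' sZ_11 sZ_12)
lemma g_12: "g 12 = -2" by (simp add: g_def sZ_1' sZ_2' sZ_12 sZ_13)
lemma g_13: "g 13 = 1" by (simp add: g_def sZ_1' sZ_2' sZ_13 sZ_14)
lemma g_14: "g 14 = 0" by (simp add: g_def sZ_1' sZ_2' sZ_14 sZ_15)
lemma g_15: "g 15 = 0" by (simp add: g_def sZ_1' sZ_2' sZ_15 sZ_16)

lemma g_R: "n \<ge> 1 \<Longrightarrow> r + 1 < fib n \<Longrightarrow> g (fib (n+1) + r) = g r"
  using sZ_step[of n r] sZ_step[of n "r+1"] by (simp add: g_def)

lemma sZ_fib: "n \<ge> 2 \<Longrightarrow> sZ (fib n) = 1"
  using sZ_step[of "n-1" 0] by (simp add: sZ_0 fib_neq_0_nat)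

lemma g_R': "n \<ge> 2 \<Longrightarrow> g (fib (n+2) - 1) = g (fib n - 1) - 1"
proof -
  assume n: "n \<ge> 2"
  have p: "fib n > 0" using n by (simp add: fib_neq_0_nat)
  have e: "fib (n+2) - 1 = fib (n+1) + (fib n - 1)" using p fib_plus_2[of n] by linarith
  have a: "sZ (fib (n+2) - 1) = Suc (sZ (fib n - 1))" unfolding e using sZ_step[of n "fib n - 1"] n p by simp
  have b: "fib (n+2) - 1 + 1 = fib (n+2)" "fib n - 1 + 1 = fib n" using p fib_plus_2[of n] by linarith+
  show ?thesis unfolding g_def b using a sZ_fib[of n] sZ_fib[of "n+2"] n by simp
qed

lemma g_fib_le: "n \<ge> 3 \<Longrightarrow> g (fib n - 1) \<le> 0 \<and> (n \<ge> 5 \<longrightarrow> g (fib n - 1) < 0)"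
proof (induction n rule: less_induct)
  case (less n)
  show ?case
  proof (cases "n \<le> 4")
    case True
    then have "n = 3 \<or> n = 4" using less.prems by auto
    then show ?thesis using g_1 g_2 by (auto simp: fibv)
  next
    case False
    define k where "k = n - 2"
    have k: "n = k + 2" "k \<ge> 3" using False less.prems unfolding k_def by linarith+
    then have "g (fib k - 1) \<le> 0" using less.IH[of k] by auto
    moreover have "g (fib n - 1) = g (fib k - 1) - 1" unfolding k(1) using k(2) by (intro g_R') simp
    ultimately show ?thesis by simp
  qed
qed

definition cc :: "(nat \<Rightarrow> nat) \<Rightarrow> nat \<Rightarrow> nat" where
  "cc e t = (LEAST i. t \<le> e i)"

lemma sm_ge: "strict_mono (e::nat\<Rightarrow>nat) \<Longrightarrow> i \<le> e i"
  by (simp add: strict_mono_imp_increasing)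

lemma e_next:
  fixes e :: "nat \<Rightarrow> nat"
  assumes sm: "strict_mono e" and rg: "range e = P" and sP: "s \<in> P" and lt: "e i < s"
    and mn: "\<forall>p\<in>P. e i < p \<longrightarrow> s \<le> p"
  shows "e (Suc i) = s"
proof -
  obtain j where j: "e j = s" using sP rg by auto
  have "i < j" using lt j sm by (metis strict_mono_less)
  then have "e (Suc i) \<le> s" using j sm by (metis Suc_leI strict_mono_less_eq)
  moreover have "s \<le> e (Suc i)" using mn rg sm by (auto simp: strict_mono_less)
  ultimately show ?thesis by simp
qed

lemma e_first:
  fixes e :: "nat \<Rightarrow> nat"
  assumes sm: "strict_mono e" and rg: "range e = P" and sP: "s \<in> P"
    and mn: "\<forall>p\<in>P. s \<le> p"
  shows "e 0 = s"
proof -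
  obtain j where j: "e j = s" using sP rg by auto
  have "e 0 \<le> s" using j sm by (metis le0 strict_mono_less_eq)
  moreover have "s \<le> e 0" using mn rg by auto
  ultimately show ?thesis by simp
qed

lemma e_min:
  fixes e :: "nat \<Rightarrow> nat"
  assumes sm: "strict_mono e" and rg: "range e = P" and pP: "p \<in> P"
  shows "e 0 \<le> p"
proof -
  obtain j where j: "p = e j" using pP rg by auto
  show ?thesis unfolding j using sm by (simp add: strict_mono_less_eq)
qed

lemma cc_iff:
  assumes sm: "strict_mono (e::nat\<Rightarrow>nat)"
  shows "e i < t \<longleftrightarrow> i < cc e t"
proof
  assume a: "e i < t"
  show "i < cc e t"
  proof (rule ccontr)
    assume "\<not> i < cc e t"
    then have "cc e t \<le> i" by simp
    moreover have "t \<le> e (cc e t)" unfolding cc_def using sm_ge[OF sm, of t] by (rule LeastI)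
    ultimately show False using a sm by (meson le_trans not_le strict_mono_less_eq)
  qed
next
  assume "i < cc e t"
  then show "e i < t" unfolding cc_def using not_less_Least by (metis not_le)
qed

lemma e_cc:
  fixes e :: "nat \<Rightarrow> nat"
  assumes sm: "strict_mono e" and rg: "range e = P" and sP: "s \<in> P" and ts: "t \<le> s"
    and mn: "\<forall>p\<in>P. t \<le> p \<longrightarrow> s \<le> p"
  shows "e (cc e t) = s"
proof -
  obtain j where j: "e j = s" using sP rg by auto
  have "t \<le> e (cc e t)" unfolding cc_def using sm_ge[OF sm, of t] by (rule LeastI)
  then have "s \<le> e (cc e t)" using mn rg by auto
  moreover have "cc e t \<le> j" unfolding cc_def using j ts by (simp add: Least_le)
  then have "e (cc e t) \<le> s" using j sm by (metis strict_mono_less_eq)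
  ultimately show ?thesis by simp
qed

definition Sprop :: "nat set \<Rightarrow> nat \<Rightarrow> bool" where
  "Sprop P n \<longleftrightarrow> (\<forall>M. fib (n+1) \<le> M \<longrightarrow> M < fib (n+2) \<longrightarrow> (M \<in> P \<longleftrightarrow> M - fib (n+1) \<in> P))"

lemma Sprop_D: "Sprop P n \<Longrightarrow> p < fib n \<Longrightarrow> (fib (n+1) + p \<in> P \<longleftrightarrow> p \<in> P)"
  unfolding Sprop_def using fib_plus_2[of n]
  by (metis add.commute add_diff_cancel_left' add_less_mono1 le_add2)

lemma K:
  fixes e :: "nat \<Rightarrow> nat"
  assumes sm: "strict_mono e" and rg: "range e = P" and S: "Sprop P n" and e0: "e 0 < fib n"
  shows "j < cc e (fib n) \<Longrightarrow> e (cc e (fib (n+1)) + j) = fib (n+1) + e j"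
proof (induction j)
  case 0
  have inP: "fib (n+1) + e 0 \<in> P" using Sprop_D[OF S e0] rg by auto
  have "e (cc e (fib (n+1))) = fib (n+1) + e 0"
  proof (rule e_cc[OF sm rg inP])
    show "fib (n + 1) \<le> fib (n + 1) + e 0" by simp
    show "\<forall>p\<in>P. fib (n + 1) \<le> p \<longrightarrow> fib (n + 1) + e 0 \<le> p"
    proof (intro ballI impI)
      fix p assume pP: "p \<in> P" and ge: "fib (n+1) \<le> p"
      show "fib (n + 1) + e 0 \<le> p"
      proof (rule ccontr)
        assume "\<not> ?thesis"
        then have lt: "p < fib (n+1) + e 0" by simp
        then have "p - fib (n+1) < fib n" using e0 ge by linarith
        then have "fib (n+1) + (p - fib (n+1)) \<in> P \<longleftrightarrow> p - fib (n+1) \<in> P" by (rule Sprop_D[OF S])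
        then have "p - fib (n+1) \<in> P" using pP ge by simp
        then have "e 0 \<le> p - fib (n+1)" by (rule e_min[OF sm rg])
        then show False using lt ge by linarith
      qed
    qed
  qed
  then show ?case by simp
next
  case (Suc j)
  have IH: "e (cc e (fib (n+1)) + j) = fib (n+1) + e j" using Suc by simp
  have lt: "e (Suc j) < fib n" using Suc.prems cc_iff[OF sm] by blast
  have inP: "fib (n+1) + e (Suc j) \<in> P" using Sprop_D[OF S lt] rg by auto
  have "e (Suc (cc e (fib (n+1)) + j)) = fib (n+1) + e (Suc j)"
  proof (rule e_next[OF sm rg inP])
    show "e (cc e (fib (n + 1)) + j) < fib (n + 1) + e (Suc j)" using IH sm by (simp add: strict_mono_less)
    show "\<forall>p\<in>P. e (cc e (fib (n + 1)) + j) < p \<longrightarrow> fib (n + 1) + e (Suc j) \<le> p"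
    proof (intro ballI impI)
      fix p assume pP: "p \<in> P" and gt: "e (cc e (fib (n + 1)) + j) < p"
      show "fib (n + 1) + e (Suc j) \<le> p"
      proof (rule ccontr)
        assume "\<not> ?thesis"
        then have lt2: "p < fib (n+1) + e (Suc j)" by simp
        have ge: "fib (n+1) \<le> p" using gt IH by simp
        then have "p - fib (n+1) < fib n" using lt lt2 by linarith
        then have "fib (n+1) + (p - fib (n+1)) \<in> P \<longleftrightarrow> p - fib (n+1) \<in> P" by (rule Sprop_D[OF S])
        then have "p - fib (n+1) \<in> P" using pP ge by simp
        then obtain k where k: "e k = p - fib (n+1)" using rg by auto
        have "e j < e k" "e k < e (Suc j)" using k gt IH lt2 ge by linarith+
        then have "j < k" "k < Suc j" using sm by (auto simp: strict_mono_less)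
        then show False by simp
      qed
    qed
  qed
  then show ?case by simp
qed

lemma Kc:
  fixes e :: "nat \<Rightarrow> nat"
  assumes sm: "strict_mono e" and rg: "range e = P" and S: "Sprop P n" and e0: "e 0 < fib n"
  shows "cc e (fib (n+2)) = cc e (fib (n+1)) + cc e (fib n)"
proof -
  define c0 where "c0 = cc e (fib n)"
  define c1 where "c1 = cc e (fib (n+1))"
  have c0p: "0 < c0" using e0 cc_iff[OF sm] c0_def by blast
  have Kj: "e (c1 + j) = fib (n+1) + e j" if "j < c0" for j
    using K[OF sm rg S e0 that[unfolded c0_def]] c1_def by simp
  have fn: "fib (n+2) = fib (n+1) + fib n" by (rule fib_plus_2)
  have "\<forall>i. e i < fib (n+2) \<longleftrightarrow> i < c1 + c0"
  proof
    fix i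
    show "e i < fib (n+2) \<longleftrightarrow> i < c1 + c0"
    proof
      assume a: "e i < fib (n+2)"
      show "i < c1 + c0"
      proof (rule ccontr)
        assume "\<not> i < c1 + c0"
        then have "e (c1 + c0) \<le> e i" using sm by (simp add: strict_mono_less_eq)
        then have M: "e (c1 + c0) < fib (n+2)" using a by simp
        have "c0 - 1 < c0" using c0p by simp
        then have last: "e (c1 + (c0 - 1)) = fib (n+1) + e (c0 - 1)" by (rule Kj)
        have "e (c1 + (c0 - 1)) < e (c1 + c0)" using sm c0p by (simp add: strict_mono_less)
        then have ge: "fib (n+1) + e (c0 - 1) < e (c1 + c0)" using last by simp
        define p where "p = e (c1 + c0)"
        have pP: "p \<in> P" using rg p_def by auto
        have "p - fib (n+1) < fib n" using M fn p_def ge by linarith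
        then have "fib (n+1) + (p - fib (n+1)) \<in> P \<longleftrightarrow> p - fib (n+1) \<in> P" by (rule Sprop_D[OF S])
        then have "p - fib (n+1) \<in> P" using pP ge p_def by simp
        then obtain k where k: "e k = p - fib (n+1)" using rg by auto
        have "e (c0 - 1) < e k" using k ge p_def by linarith
        then have "c0 - 1 < k" using sm by (simp add: strict_mono_less)
        moreover have "e k < fib n" using k M fn p_def ge by linarith
        then have "k < c0" using cc_iff[OF sm] c0_def by blast
        ultimately show False by simp
      qed
    next
      assume a: "i < c1 + c0"
      show "e i < fib (n+2)"
      proof (cases "i < c1")
        case True
        then have "e i < fib (n+1)" using cc_iff[OF sm] c1_def by blast
        then show ?thesis using fn by simp
      next
        case False
        then obtain j where j: "i = c1 + j" "j < c0" using a by (metis add_diff_inverse_nat nat_add_left_cancel_less)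
        then have "e j < fib n" using cc_iff[OF sm] c0_def by blast
        then show ?thesis using Kj[OF j(2)] j(1) fn by simp
      qed
    qed
  qed
  then have "\<forall>i. i < cc e (fib (n+2)) \<longleftrightarrow> i < c1 + c0" using cc_iff[OF sm] by blast
  then have "cc e (fib (n+2)) = c1 + c0" by (metis less_irrefl nat_neq_iff)
  then show ?thesis using c0_def c1_def by simp
qed

lemma Kx:
  fixes e :: "nat \<Rightarrow> nat"
  assumes sm: "strict_mono e" and rg: "range e = P"
    and S0: "Sprop P m" and S1: "Sprop P (m+1)" and S2: "Sprop P (m+2)" and e0: "e 0 < fib m"
    and j: "j < cc e (fib (m+1))"
  shows "int (e (Suc (cc e (fib (m+2)) + j))) - int (e (cc e (fib (m+2)) + j)) = int (e (Suc j)) - int (e j)"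
proof -
  have e1: "e 0 < fib (m+1)" using e0 fib_mono[of m "m+1"] by simp
  have e2: "e 0 < fib (m+2)" using e0 fib_mono[of m "m+2"] by simp
  define c0 where "c0 = cc e (fib (m+1))"
  define c1 where "c1 = cc e (fib (m+2))"
  have Kj: "e (c1 + j) = fib (m+2) + e j" if "j < c0" for j
    using K[OF sm rg S1 e1 that[unfolded c0_def]] c1_def by (simp add: add.commute)
  show ?thesis
  proof (cases "Suc j < c0")
    case True
    then show ?thesis using Kj[of j] Kj[of "Suc j"] j c0_def c1_def by simp
  next
    case False
    then have sj: "Suc j = c0" using j c0_def by simp
    have a: "e (c1 + j) = fib (m+2) + e j" using j c0_def by (intro Kj) simp
    have kc: "cc e (fib (m+1+2)) = cc e (fib (m+1+1)) + cc e (fib (m+1))" by (rule Kc[OF sm rg S1 e1])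
    have "cc e (fib (m+3)) = c1 + c0" using kc unfolding c0_def c1_def
      by (simp add: numeral_3_eq_3 numeral_2_eq_2)
    then have "c1 + Suc j = cc e (fib (m+3))" using sj by simp
    moreover have "e (cc e (fib (m+3))) = fib (m+3) + e 0"
    proof -
      have "0 < cc e (fib (m+2))" using e2 cc_iff[OF sm] by blast
      from K[OF sm rg S2 e2 this] show ?thesis by (simp add: numeral_3_eq_3)
    qed
    ultimately have b: "e (Suc (c1 + j)) = fib (m+3) + e 0" by simp
    have c: "e (Suc j) = fib (m+1) + e 0"
    proof -
      have "0 < cc e (fib m)" using e0 cc_iff[OF sm] by blast
      from K[OF sm rg S0 e0 this] sj c0_def show ?thesis by simp
    qed
    have f3: "fib (m+3) = fib (m+2) + fib (m+1)" using fib_plus_2[of "m+1"] by (simp add: numeral_3_eq_3)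
    show ?thesis using a b c f3 c1_def by simp
  qed
qed

lemma word_ind:
  fixes u :: "nat \<Rightarrow> int list" and x :: "nat \<Rightarrow> int" and c :: "nat \<Rightarrow> nat"
  assumes u: "\<And>t. u (m1+t+2) = u (m1+t+1) @ u (m1+t)"
    and cs: "\<And>t. c (t+2) = c (t+1) + c t"
    and xs: "\<And>t j. j < c t \<Longrightarrow> x (c (t+1) + j) = x j"
    and b0: "length (u m1) = c 0" "\<forall>k<c 0. x k = u m1 ! k"
    and b1: "length (u (m1+1)) = c 1" "\<forall>k<c 1. x k = u (m1+1) ! k"
  shows "length (u (m1+t)) = c t \<and> (\<forall>k<c t. x k = u (m1+t) ! k)"
proof (induction t rule: less_induct)
  case (less t)
  show ?case
  proof (cases "t < 2")
    case True
    then have "t = 0 \<or> t = 1" by auto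
    then show ?thesis using b0 b1 by auto
  next
    case False
    then obtain s where s: "t = s + 2" by (metis add.commute le_Suc_ex not_less)
    have IH0: "length (u (m1+s)) = c s \<and> (\<forall>k<c s. x k = u (m1+s) ! k)" using less.IH s by simp
    have IH1: "length (u (m1+s+1)) = c (s+1) \<and> (\<forall>k<c (s+1). x k = u (m1+s+1) ! k)"
      using less.IH[of "s+1"] s by (simp add: add.assoc)
    have ut: "u (m1+t) = u (m1+s+1) @ u (m1+s)" using u[of s] s by (simp add: add.assoc)
    have len: "length (u (m1+t)) = c t" using ut IH0 IH1 cs[of s] s by simp
    have "\<forall>k<c t. x k = u (m1+t) ! k"
    proof (intro allI impI)
      fix k assume k: "k < c t"
      show "x k = u (m1+t) ! k"
      proof (cases "k < c (s+1)")
        case True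
        then show ?thesis using IH1 ut by (simp add: nth_append)
      next
        case False
        define j where "j = k - c (s+1)"
        have j: "k = c (s+1) + j" "j < c s" using False k cs[of s] s j_def by auto
        have "x k = x j" using xs[of j s] j by simp
        also have "\<dots> = u (m1+s) ! j" using IH0 j by simp
        also have "\<dots> = u (m1+t) ! k" using ut IH1 j by (simp add: nth_append)
        finally show ?thesis .
      qed
    qed
    then show ?thesis using len by simp
  qed
qed

lemma len_grow:
  fixes u :: "nat \<Rightarrow> int list"
  assumes u: "\<And>t. u (m1+t+2) = u (m1+t+1) @ u (m1+t)"
    and n0: "u m1 \<noteq> []" and n1: "u (m1+1) \<noteq> []"
  shows "t \<le> length (u (m1+t)) \<and> 1 \<le> length (u (m1+t))"
proof (induction t rule: less_induct)
  case (less t)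
  show ?case
  proof (cases "t < 2")
    case True
    then have "t = 0 \<or> t = 1" by auto
    then show ?thesis using n0 n1 by (auto simp: Suc_le_eq)
  next
    case False
    then obtain s where s: "t = s + 2" by (metis add.commute le_Suc_ex not_less)
    have "s \<le> length (u (m1+s)) \<and> 1 \<le> length (u (m1+s))" using less.IH s by simp
    moreover have "s+1 \<le> length (u (m1+s+1))" using less.IH[of "s+1"] s by (simp add: add.assoc)
    moreover have "u (m1+t) = u (m1+s+1) @ u (m1+s)" using u[of s] s by (simp add: add.assoc)
    ultimately show ?thesis using s by simp
  qed
qed

lemma main:
  fixes e :: "nat \<Rightarrow> nat" and u :: "nat \<Rightarrow> int list"
  assumes sm: "strict_mono e" and rg: "range e = P"
    and Sall: "\<And>n. n \<ge> m0 \<Longrightarrow> Sprop P n" and e0: "e 0 < fib m0"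
    and u: "\<And>t. u (m1+t+2) = u (m1+t+1) @ u (m1+t)"
    and b0: "length (u m1) = cc e (fib (m0+1))" "\<forall>k<cc e (fib (m0+1)). int (e (Suc k)) - int (e k) = u m1 ! k"
    and b1: "length (u (m1+1)) = cc e (fib (m0+2))" "\<forall>k<cc e (fib (m0+2)). int (e (Suc k)) - int (e k) = u (m1+1) ! k"
  shows "\<forall>k<length (u (m1+t)). int (e (Suc k)) - int (e k) = u (m1+t) ! k"
proof -
  define c where "c t = cc e (fib (m0+1+t))" for t
  define x where "x k = int (e (Suc k)) - int (e k)" for k
  have ef: "\<And>t. e 0 < fib (m0+t)" using e0 fib_mono[of m0] by (meson le_add1 less_le_trans)
  have cs: "\<And>t. c (t+2) = c (t+1) + c t"
  proof -
    fix t
    have "cc e (fib (m0+1+t+2)) = cc e (fib (m0+1+t+1)) + cc e (fib (m0+1+t))"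
      by (rule Kc[OF sm rg Sall]) (simp, metis ef add.assoc)
    then show "c (t+2) = c (t+1) + c t" unfolding c_def by (simp add: add.assoc)
  qed
  have xs: "\<And>t j. j < c t \<Longrightarrow> x (c (t+1) + j) = x j"
  proof -
    fix t j assume j: "j < c t"
    have "int (e (Suc (cc e (fib (m0+t+2)) + j))) - int (e (cc e (fib (m0+t+2)) + j)) = int (e (Suc j)) - int (e j)"
      by (rule Kx[OF sm rg Sall Sall Sall ef]) (use j c_def in \<open>simp_all add: add.commute add.left_commute\<close>)
    then show "x (c (t+1) + j) = x j" unfolding x_def c_def by (simp add: add.commute add.left_commute)
  qed
  have "length (u (m1+t)) = c t \<and> (\<forall>k<c t. x k = u (m1+t) ! k)"
    by (rule word_ind[OF u cs xs]) (use b0 b1 in \<open>simp_all add: c_def x_def add.commute\<close>)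
  then show ?thesis unfolding x_def by simp
qed

lemma fp_concl:
  fixes mu :: "int \<Rightarrow> int list"
  assumes all: "\<And>t. \<forall>k<length (morph_iter mu a (m1+t)). x k = morph_iter mu a (m1+t) ! k"
    and grow: "\<And>t. t \<le> length (morph_iter mu a (m1+t))"
    and small: "\<And>n k. n < m1 \<Longrightarrow> k < length (morph_iter mu a n) \<Longrightarrow> x k = morph_iter mu a n ! k"
  shows "is_fixed_point mu a x"
  unfolding is_fixed_point_def
proof (intro conjI allI impI)
  fix m
  show "\<exists>n. m < length (morph_iter mu a n)"
    using grow[of "Suc m"] by (intro exI[of _ "m1 + Suc m"]) simp
next
  fix n k assume k: "k < length (morph_iter mu a n)"
  show "x k = morph_iter mu a n ! k"
  proof (cases "n < m1")
    case True then show ?thesis using small k by blast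
  next
    case False
    then have "n = m1 + (n - m1)" by simp
    then show ?thesis using all[of "n - m1"] k by metis
  qed
qed

lemma mi_app: fixes mu :: "int \<Rightarrow> int list" shows "(((\<lambda>w. concat (map mu w)) ^^ n) (v @ w)) = ((\<lambda>w. concat (map mu w)) ^^ n) v @ ((\<lambda>w. concat (map mu w)) ^^ n) w"
  by (induction n arbitrary: v w) auto

lemma mi_Suc: fixes mu :: "int \<Rightarrow> int list" shows "((\<lambda>w. concat (map mu w)) ^^ Suc n) [b] = ((\<lambda>w. concat (map mu w)) ^^ n) (mu b)"
  by (simp add: funpow_Suc_right del: funpow.simps)

lemma mi_fib:
  fixes mu :: "int \<Rightarrow> int list"
  assumes "mu a = [a, b]" "mu b = [a]"
  shows "morph_iter mu a (n+2) = morph_iter mu a (n+1) @ morph_iter mu a n"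
proof -
  let ?F = "\<lambda>w. concat (map mu w)"
  have "morph_iter mu a (n+2) = (?F ^^ Suc n) (mu a)" unfolding morph_iter_def using mi_Suc[where mu=mu and n="Suc n" and b=a] by simp
  also have "\<dots> = (?F ^^ Suc n) [a] @ (?F ^^ Suc n) [b]" using assms mi_app[where mu=mu and n="Suc n" and v="[a]" and w="[b]"] by simp
  also have "(?F ^^ Suc n) [b] = (?F ^^ n) [a]" using mi_Suc[where mu=mu and n=n and b=b] assms by simp
  finally show ?thesis unfolding morph_iter_def by simp
qed

lemma fib_ge: "n \<le> fib (n+1)"
proof (induction n rule: less_induct)
  case (less n)
  show ?case
  proof (cases "n \<le> 2")
    case True
    then have "n = 0 \<or> n = 1 \<or> n = 2" by auto
    then show ?thesis by (auto simp: fibv)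
  next
    case False
    define k where "k = n - 2"
    have k: "n = k + 2" using False k_def by simp
    have "k + 1 \<le> fib (k+2)" using less.IH[of "k+1"] k by simp
    moreover have "k \<le> fib (k+1)" using less.IH[of k] k by simp
    moreover have "fib (k+3) = fib (k+2) + fib (k+1)" using fib_plus_2[of "k+1"] by (simp add: numeral_3_eq_3)
    moreover have "1 \<le> k" using False k by simp
    ultimately show ?thesis using k by (simp add: numeral_3_eq_3)
  qed
qed

lemma inf_from_S:
  assumes S: "\<And>n. n \<ge> n0 \<Longrightarrow> Sprop P n" and p: "p \<in> P" "p < fib n0"
  shows "infinite P"
  unfolding infinite_nat_iff_unbounded_le
proof
  fix m
  have "p < fib (m + n0)" using p fib_mono[of n0 "m+n0"] by simp
  then have "fib (m + n0 + 1) + p \<in> P" using Sprop_D[OF S[of "m+n0"]] p by simp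
  moreover have "m \<le> fib (m + n0 + 1) + p" using fib_ge[of "m+n0"] by simp
  ultimately show "\<exists>n\<ge>m. n \<in> P" by blast
qed

lemma Sprop_g:
  assumes n: "n \<ge> 2" and P: "P = {N. Q (g N)}"
    and last: "Q (g (fib n - 1) - 1) \<longleftrightarrow> Q (g (fib n - 1))"
  shows "Sprop P n"
  unfolding Sprop_def
proof (intro allI impI)
  fix M assume M1: "fib (n+1) \<le> M" and M2: "M < fib (n+2)"
  define r where "r = M - fib (n+1)"
  have fn: "fib (n+2) = fib (n+1) + fib n" by (rule fib_plus_2)
  have Mr: "M = fib (n+1) + r" and rl: "r < fib n" using M1 M2 fn r_def by linarith+
  show "M \<in> P \<longleftrightarrow> M - fib (n+1) \<in> P"
  proof (cases "r + 1 < fib n")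
    case True
    then have "g M = g r" unfolding Mr using n by (intro g_R) simp_all
    then show ?thesis using P r_def by simp
  next
    case False
    then have rr: "r = fib n - 1" using rl by simp
    have "M = fib (n+2) - 1" using Mr rr fn rl by linarith
    then have "g M = g (fib n - 1) - 1" using g_R' n by simp
    then show ?thesis using P r_def rr last by simp
  qed
qed

lemma e_next_conc:
  fixes e :: "nat \<Rightarrow> nat"
  assumes sm: "strict_mono e" and rg: "range e = P" and ei: "e i = a" and j: "j = Suc i"
    and bP: "b \<in> P" and ab: "a < b" and gap: "\<And>p. a < p \<Longrightarrow> p < b \<Longrightarrow> p \<notin> P"
  shows "e j = b"
proof -
  have "e (Suc i) = b"
    by (rule e_next[OF sm rg bP]) (use ei ab gap in \<open>auto simp: not_less[symmetric]\<close>)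
  then show ?thesis using j by simp
qed

lemma e_first_conc:
  fixes e :: "nat \<Rightarrow> nat"
  assumes sm: "strict_mono e" and rg: "range e = P" and bP: "b \<in> P" and gap: "\<And>p. p < b \<Longrightarrow> p \<notin> P"
  shows "e 0 = b"
  by (rule e_first[OF sm rg bP]) (use gap in \<open>auto simp: not_less[symmetric]\<close>)

lemma cc_conc:
  fixes e :: "nat \<Rightarrow> nat"
  assumes sm: "strict_mono e" and a: "e i < t" and b: "t \<le> e j" and j: "j = Suc i"
  shows "cc e t = j"
proof -
  have "i < cc e t" using a cc_iff[OF sm] by blast
  moreover have "\<not> Suc i < cc e t" using b j cc_iff[OF sm, of "Suc i" t] by simp
  ultimately show ?thesis using j by simp
qed

lemma nat_cases_between: "(a::nat) < p \<Longrightarrow> p < b \<Longrightarrow> p \<in> {a<..<b}" by simp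

lemma partI: "IZ 1 = 0 \<and> is_fixed_point muI 3 (Delta IZ)"
proof -
  define P where "P = incr_pts"
  have Pdef: "P = {N. 0 < g N}" unfolding P_def incr_pts_def g_def by simp
  have S: "Sprop P n" if "n \<ge> 3" for n
  proof (rule Sprop_g[OF _ Pdef])
    show "2 \<le> n" using that by simp
    have "g (fib n - 1) \<le> 0" using g_fib_le[of n] that by simp
    then show "0 < g (fib n - 1) - 1 \<longleftrightarrow> 0 < g (fib n - 1)" by simp
  qed
  have inf: "infinite P" by (rule inf_from_S[of 3 P 0]) (use S Pdef g_0 fibv in auto)
  define e where "e = enumerate P"
  have sm: "strict_mono e" using inf e_def by (simp add: strict_mono_enumerate)
  have rg: "range e = P" using inf e_def by (simp add: range_enumerate)
  have e0: "e 0 = 0"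
    by (rule e_first_conc[OF sm rg]) (auto simp: Pdef g_0)
  have e1: "e 1 = 3"
  proof (rule e_next_conc[OF sm rg e0])
    show "3 \<in> P" using Pdef g_3 by simp
    fix p :: nat assume "0 < p" "p < 3"
    then have "p = 1 \<or> p = 2" by presburger
    then show "p \<notin> P" using Pdef g_1 g_2 by auto
  qed simp_all
  have e1': "e (Suc 0) = 3" using e1 by simp
  have e2: "e 2 = 5"
  proof (rule e_next_conc[OF sm rg e1])
    show "5 \<in> P" using Pdef g_5 by simp
    fix p :: nat assume "3 < p" "p < 5"
    then have "p = 4" by presburger
    then show "p \<notin> P" using Pdef g_4 by auto
  qed simp_all
  have e2': "e (Suc (Suc 0)) = 5" using e2 by (simp add: numeral_2_eq_2)
  define u where "u = morph_iter muI 3"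
  have u0: "u 0 = [3]" by (simp add: u_def morph_iter_def)
  have u1: "u 1 = [3,2]" by (simp add: u_def morph_iter_def muI_def)
  have urec: "u (0+t+2) = u (0+t+1) @ u (0+t)" for t
  proof -
    have "morph_iter muI 3 (t+2) = morph_iter muI 3 (t+1) @ morph_iter muI 3 t"
      by (rule mi_fib[where b=2]) (simp_all add: muI_def)
    then show ?thesis unfolding u_def by simp
  qed
  have c4: "cc e (fib (3+1)) = 1" by (rule cc_conc[OF sm, of 0]) (simp_all add: e0 e1 e1' fibv)
  have c5: "cc e (fib (3+2)) = 2" by (rule cc_conc[OF sm, of 1]) (simp_all add: e1 e1' e2 fibv)
  have all: "\<forall>k<length (u (0+t)). int (e (Suc k)) - int (e k) = u (0+t) ! k" for t
  proof (rule main[OF sm rg S _ urec])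
    show "e 0 < fib 3" using e0 fibv by simp
    show "length (u 0) = cc e (fib (3+1))" using u0 c4 by simp
    show "length (u (0+1)) = cc e (fib (3+2))" using u1 c5 by simp
    show "\<forall>k<cc e (fib (3+1)). int (e (Suc k)) - int (e k) = u 0 ! k"
      using c4 u0 e0 e1 e1' by simp
    show "\<forall>k<cc e (fib (3+2)). int (e (Suc k)) - int (e k) = u (0+1) ! k"
      using c5 u1 e0 e1 e1' e2 e2' by (auto simp: less_2_cases_iff)
  qed simp
  have grow: "t \<le> length (u (0+t))" for t
    using len_grow[OF urec] u0 u1 by simp
  have dl: "Delta IZ = (\<lambda>k. int (e (Suc k)) - int (e k))"
    by (rule ext) (simp add: Delta_def IZ_def e_def P_def)
  have "is_fixed_point muI 3 (Delta IZ)"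
    unfolding dl by (rule fp_concl[where ?m1.0=0]) (use all grow in \<open>simp_all add: u_def\<close>)
  moreover have "IZ 1 = 0" using e0 by (simp add: IZ_def e_def P_def)
  ultimately show ?thesis by simp
qed

lemma mi_C: "morph_iter muC 1 (n+3) = morph_iter muC 1 (n+2) @ morph_iter muC 1 (n+1)"
proof -
  let ?F = "\<lambda>w. concat (map muC w)"
  have "morph_iter muC 1 (n+3) = (?F ^^ Suc (Suc n)) (muC 1)" unfolding morph_iter_def
    using mi_Suc[where mu=muC and n="Suc (Suc n)" and b=1] by (simp add: numeral_3_eq_3)
  also have "\<dots> = (?F ^^ Suc (Suc n)) [1] @ (?F ^^ Suc (Suc n)) [4]"
    using mi_app[where mu=muC and n="Suc (Suc n)" and v="[1]" and w="[4]"] by (simp add: muC_def)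
  also have "(?F ^^ Suc (Suc n)) [4] = (?F ^^ Suc n) [3]"
    using mi_Suc[where mu=muC and n="Suc n" and b=4] by (simp add: muC_def)
  also have "(?F ^^ Suc n) [3] = (?F ^^ Suc n) [1]"
    using mi_Suc[where mu=muC and n=n and b=3] mi_Suc[where mu=muC and n=n and b=1] by (simp add: muC_def)
  finally show ?thesis unfolding morph_iter_def by (simp add: numeral_2_eq_2)
qed

lemma partC: "CZ 1 = 1 \<and> is_fixed_point muC 1 (Delta CZ)"
proof -
  define P where "P = const_pts"
  have Pdef: "P = {N. g N = 0}" unfolding P_def const_pts_def g_def by simp
  have S: "Sprop P n" if "n \<ge> 5" for n
  proof (rule Sprop_g[OF _ Pdef])
    show "2 \<le> n" using that by simp
    have "g (fib n - 1) < 0" using g_fib_le[of n] that by simp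
    then show "g (fib n - 1) - 1 = 0 \<longleftrightarrow> g (fib n - 1) = 0" by simp
  qed
  have inf: "infinite P" by (rule inf_from_S[of 5 P 1]) (use S Pdef g_1 fibv in auto)
  define e where "e = enumerate P"
  have sm: "strict_mono e" using inf e_def by (simp add: strict_mono_enumerate)
  have rg: "range e = P" using inf e_def by (simp add: range_enumerate)
  have e0: "e 0 = 1"
  proof (rule e_first_conc[OF sm rg])
    show "1 \<in> P" using Pdef g_1 by simp
    fix p :: nat assume "p < 1"
    then have "p = 0" by presburger
    then show "p \<notin> P" using Pdef g_0 by auto
  qed
  have e1: "e 1 = 2"
  proof (rule e_next_conc[OF sm rg e0])
    show "2 \<in> P" using Pdef g_2 by simp
  qed simp_all
  have e2: "e 2 = 6"
  proof (rule e_next_conc[OF sm rg e1])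
    show "6 \<in> P" using Pdef g_6 by simp
    fix p :: nat assume "2 < p" "p < 6"
    then have "p = 3 \<or> p = 4 \<or> p = 5" by presburger
    then show "p \<notin> P" using Pdef g_3 g_4 g_5 by auto
  qed simp_all
  have e3: "e 3 = 9"
  proof (rule e_next_conc[OF sm rg e2])
    show "9 \<in> P" using Pdef g_9 by simp
    fix p :: nat assume "6 < p" "p < 9"
    then have "p = 7 \<or> p = 8" by presburger
    then show "p \<notin> P" using Pdef g_7 g_8 by auto
  qed simp_all
  have e4: "e 4 = 10"
  proof (rule e_next_conc[OF sm rg e3])
    show "10 \<in> P" using Pdef g_10 by simp
  qed simp_all
  have e5: "e 5 = 14"
  proof (rule e_next_conc[OF sm rg e4])
    show "14 \<in> P" using Pdef g_14 by simp
    fix p :: nat assume "10 < p" "p < 14"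
    then have "p = 11 \<or> p = 12 \<or> p = 13" by presburger
    then show "p \<notin> P" using Pdef g_11 g_12 g_13 by auto
  qed simp_all
  have es: "e (Suc 0) = 2" "e (Suc (Suc 0)) = 6" "e (Suc (Suc (Suc 0))) = 9"
     "e (Suc (Suc (Suc (Suc 0)))) = 10" "e (Suc (Suc (Suc (Suc (Suc 0))))) = 14"
    using e1 e2 e3 e4 e5 by (simp_all add: eval_nat_numeral)
  define u where "u = morph_iter muC 1"
  have u0: "u 0 = [1]" by (simp add: u_def morph_iter_def)
  have u1: "u 1 = [1,4]" by (simp add: u_def morph_iter_def muC_def)
  have u2: "u 2 = [1,4,3]" by (simp add: u_def morph_iter_def muC_def eval_nat_numeral)
  have u3: "u 3 = [1,4,3,1,4]" by (simp add: u_def morph_iter_def muC_def eval_nat_numeral)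
  have urec: "u (2+t+2) = u (2+t+1) @ u (2+t)" for t
  proof -
    have "t + 1 + 3 = 2 + t + 2" "t + 1 + 2 = 2 + t + 1" "t + 1 + 1 = 2 + t" by simp_all
    then show ?thesis using mi_C[of "t+1"] unfolding u_def by metis
  qed
  have c6: "cc e (fib (5+1)) = 3" by (rule cc_conc[OF sm, of 2]) (simp_all add: e2 e3 fibv)
  have c7: "cc e (fib (5+2)) = 5" by (rule cc_conc[OF sm, of 4]) (simp_all add: e4 e5 fibv)
  have all: "\<forall>k<length (u (2+t)). int (e (Suc k)) - int (e k) = u (2+t) ! k" for t
  proof (rule main[OF sm rg S _ urec])
    show "e 0 < fib 5" using e0 fibv by simp
    show "length (u 2) = cc e (fib (5+1))" using u2 c6 by simp
    show "length (u (2+1)) = cc e (fib (5+2))" using u3 c7 by simp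
    show "\<forall>k<cc e (fib (5+1)). int (e (Suc k)) - int (e k) = u 2 ! k"
    proof (intro allI impI)
      fix k assume "k < cc e (fib (5+1))"
      then have "k = 0 \<or> k = 1 \<or> k = 2" using c6 by presburger
      then show "int (e (Suc k)) - int (e k) = u 2 ! k" using u2 e0 e1 e2 e3 es by auto
    qed
    show "\<forall>k<cc e (fib (5+2)). int (e (Suc k)) - int (e k) = u (2+1) ! k"
    proof (intro allI impI)
      fix k assume "k < cc e (fib (5+2))"
      then have "k = 0 \<or> k = 1 \<or> k = 2 \<or> k = 3 \<or> k = 4" using c7 by presburger
      then show "int (e (Suc k)) - int (e k) = u (2+1) ! k" using u3 e0 e1 e2 e3 e4 e5 es by auto
    qed
  qed simp
  have grow0: "t \<le> length (u (2+t))" for t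
    using len_grow[OF urec] u2 u3 by simp
  have grow: "t \<le> length (u (2+t))" for t
    using grow0 by simp
  have dl: "Delta CZ = (\<lambda>k. int (e (Suc k)) - int (e k))"
    by (rule ext) (simp add: Delta_def CZ_def e_def P_def)
  have "is_fixed_point muC 1 (Delta CZ)"
    unfolding dl
  proof (rule fp_concl[where ?m1.0=2])
    show "\<forall>k<length (morph_iter muC 1 (2 + t)). int (e (Suc k)) - int (e k) = morph_iter muC 1 (2 + t) ! k" for t
      using all[of t] by (simp add: u_def)
    show "t \<le> length (morph_iter muC 1 (2 + t))" for t using grow[of t] by (simp add: u_def)
    fix n k assume n: "n < 2" and k: "k < length (morph_iter muC 1 n)"
    then have "n = 0 \<or> n = 1" by presburger
    then show "int (e (Suc k)) - int (e k) = morph_iter muC 1 n ! k"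
    proof
      assume "n = 0" then show ?thesis using k u0 e0 es unfolding u_def by auto
    next
      assume n1: "n = 1"
      then have "k = 0 \<or> k = 1" using k u1 unfolding u_def by auto
      then show ?thesis using n1 u1 e0 e1 es unfolding u_def by auto
    qed
  qed
  moreover have "CZ 1 = 1" using e0 by (simp add: CZ_def e_def P_def)
  ultimately show ?thesis by simp
qed

lemma partD: "DZ 1 = -1 \<and> is_fixed_point muD 5 (Delta DZ)"
proof -
  define P where "P = {M. M = 0 \<or> g (M - 1) < 0}"
  have decr: "decr_pts = {N. g N < 0}" unfolding decr_pts_def g_def by simp
  have S: "Sprop P n" if n: "n \<ge> 4" for n
    unfolding Sprop_def
  proof (intro allI impI)
    fix M assume M1: "fib (n+1) \<le> M" and M2: "M < fib (n+2)"
    define r where "r = M - fib (n+1)"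
    have fn: "fib (n+2) = fib (n+1) + fib n" by (rule fib_plus_2)
    have Mr: "M = fib (n+1) + r" and rl: "r < fib n" using M1 M2 fn r_def by linarith+
    have fpos: "fib (n+1) > 0" by (simp add: fib_neq_0_nat)
    have rr: "M - fib (n+1) = r" using r_def by simp
    have key: "M \<in> P \<longleftrightarrow> r \<in> P"
    proof (cases "r = 0")
      case True
      have "g (fib (n+1) - 1) < 0" using g_fib_le[of "n+1"] n by simp
      then show ?thesis using True Mr unfolding P_def by simp
    next
      case False
      have "M - 1 = fib (n+1) + (r - 1)" using Mr False by simp
      moreover have "g (fib (n+1) + (r - 1)) = g (r - 1)" using n False rl by (intro g_R) simp_all
      ultimately have "g (M - 1) = g (r - 1)" by simp
      then show ?thesis using False Mr fpos unfolding P_def by simp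
    qed
    then show "M \<in> P \<longleftrightarrow> M - fib (n+1) \<in> P" using rr by simp
  qed
  have infP: "infinite P" by (rule inf_from_S[of 4 P 0]) (use S P_def fibv in auto)
  have Pim: "P = insert 0 (Suc ` decr_pts)"
  proof (rule set_eqI)
    fix M show "M \<in> P \<longleftrightarrow> M \<in> insert 0 (Suc ` decr_pts)"
      by (cases M) (auto simp: P_def decr)
  qed
  have inf: "infinite decr_pts"
  proof
    assume "finite decr_pts"
    then have "finite P" unfolding Pim by simp
    then show False using infP by simp
  qed
  define e where "e i = (if i = 0 then 0 else Suc (enumerate decr_pts (i - 1)))" for i
  have sm: "strict_mono e"
    unfolding strict_mono_Suc_iff
  proof
    fix i show "e i < e (Suc i)"
      using enumerate_mono[OF _ inf, of "i - 1" i] by (cases i) (simp_all add: e_def)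
  qed
  have rg: "range e = P"
  proof -
    have "range e = insert 0 (Suc ` range (enumerate decr_pts))"
    proof (rule set_eqI)
      fix y show "y \<in> range e \<longleftrightarrow> y \<in> insert 0 (Suc ` range (enumerate decr_pts))"
      proof
        assume "y \<in> range e"
        then obtain i where "y = e i" by auto
        then show "y \<in> insert 0 (Suc ` range (enumerate decr_pts))" by (cases i) (auto simp: e_def)
      next
        assume "y \<in> insert 0 (Suc ` range (enumerate decr_pts))"
        then consider "y = 0" | i where "y = Suc (enumerate decr_pts i)" by auto
        then show "y \<in> range e"
        proof cases
          case 1 then show ?thesis by (metis e_def rangeI)
        next
          case 2 then have "y = e (Suc i)" by (simp add: e_def)
          then show ?thesis by simp
        qed
      qed
    qed
    then show ?thesis using Pim range_enumerate[OF inf] by simp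
  qed
  have e0: "e 0 = 0" by (simp add: e_def)
  have e1: "e 1 = 5"
  proof (rule e_next_conc[OF sm rg e0])
    show "5 \<in> P" using P_def g_4 by simp
    fix p :: nat assume "0 < p" "p < 5"
    then have "p = 1 \<or> p = 2 \<or> p = 3 \<or> p = 4" by presburger
    then show "p \<notin> P" using P_def g_0 g_1 g_2 g_3 by auto
  qed simp_all
  have e2: "e 2 = 8"
  proof (rule e_next_conc[OF sm rg e1])
    show "8 \<in> P" using P_def g_7 by simp
    fix p :: nat assume "5 < p" "p < 8"
    then have "p = 6 \<or> p = 7" by presburger
    then show "p \<notin> P" using P_def g_5 g_6 by auto
  qed simp_all
  have es: "e (Suc 0) = 5" "e (Suc (Suc 0)) = 8"
    using e1 e2 by (simp_all add: eval_nat_numeral)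
  define u where "u = morph_iter muD 5"
  have u0: "u 0 = [5]" by (simp add: u_def morph_iter_def)
  have u1: "u 1 = [5,3]" by (simp add: u_def morph_iter_def muD_def)
  have urec: "u (0+t+2) = u (0+t+1) @ u (0+t)" for t
  proof -
    have "morph_iter muD 5 (t+2) = morph_iter muD 5 (t+1) @ morph_iter muD 5 t"
      by (rule mi_fib[where b=3]) (simp_all add: muD_def)
    then show ?thesis unfolding u_def by simp
  qed
  have c5: "cc e (fib (4+1)) = 1" by (rule cc_conc[OF sm, of 0]) (simp_all add: e0 e1 es fibv)
  have c6: "cc e (fib (4+2)) = 2" by (rule cc_conc[OF sm, of 1]) (simp_all add: e1 e2 es fibv)
  have all: "\<forall>k<length (u (0+t)). int (e (Suc k)) - int (e k) = u (0+t) ! k" for t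
  proof (rule main[OF sm rg S _ urec])
    show "e 0 < fib 4" using e0 fibv by simp
    show "length (u 0) = cc e (fib (4+1))" using u0 c5 by simp
    show "length (u (0+1)) = cc e (fib (4+2))" using u1 c6 by simp
    show "\<forall>k<cc e (fib (4+1)). int (e (Suc k)) - int (e k) = u 0 ! k"
      using c5 u0 e0 es by simp
    show "\<forall>k<cc e (fib (4+2)). int (e (Suc k)) - int (e k) = u (0+1) ! k"
      using c6 u1 e0 es by (auto simp: less_2_cases_iff)
  qed simp
  have grow: "t \<le> length (u (0+t))" for t
    using len_grow[OF urec] u0 u1 by simp
  have dl: "Delta DZ = (\<lambda>k. int (e (Suc k)) - int (e k))"
  proof (rule ext)
    fix k show "Delta DZ k = int (e (Suc k)) - int (e k)"
      by (cases k) (simp_all add: Delta_def DZ_def e_def)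
  qed
  have "is_fixed_point muD 5 (Delta DZ)"
    unfolding dl by (rule fp_concl[where ?m1.0=0]) (use all grow in \<open>simp_all add: u_def\<close>)
  moreover have "DZ 1 = -1" by (simp add: DZ_def)
  ultimately show ?thesis by simp
qed

theorem theorem3:
  shows "(IZ 1 = 0 \<and> is_fixed_point muI 3 (Delta IZ)) \<and>
         (CZ 1 = 1 \<and> is_fixed_point muC 1 (Delta CZ)) \<and>
         (DZ 1 = -1 \<and> is_fixed_point muD 5 (Delta DZ))"
  using partI partC partD by blast

end
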